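(* $A\in \kappa\mathbf{CH}$ if and only if $\mathcal{BL}_\kappa(\mathrm{p}\mathcal{H} A) = A$.
   Context: Let $A$ be a meet-semilattice (in the paper, a bounded distributive lattice) and $\kappa$ a regular cardinal. A $\kappa$-join is a join of a set of cardinality $<\kappa$; $A$ is $\kappa$-complete if all $\kappa$-joins exist. $\kappa\mathbf{CH}$ is the class of $\kappa$-complete Heyting lattices. A join $\bigvee S$ existing in $A$ is distributive if $a\wedge\bigvee S=\bigvee\{a\wedge s: s\in S\}$ for all $a\in A$; $A$ is a $\kappa$-frame if it is $\kappa$-complete and every $\kappa$-join is distributive. $\mathcal{BL} A$ (the Bruns-Lakser completion) is the frame of D-ideals of $A$ (downsets closed under distributive joins of their subsets), with $A$ identified with its principal downsets. A relative annihilator of $A$ is $\langle a,b\rangle=\{x\in A: a\wedge x\le b\}$. The proHeyting extension $\mathrm{p}\mathcal{H} A$ is the bounded sublattice of $\mathcal{BL} A$ generated by the relative annihilators of $A$; one has $A\subseteq\mathrm{p}\mathcal{H} A\subseteq\mathcal{BL} A$ and $\mathcal{BL}(\mathrm{p}\mathcal{H} A)$ is identified with $\mathcal{BL} A$. For a meet-semilattice $B$ with $A\le B\le\mathcal{BL} A$, $\mathcal{BL}_\kappa B$ denotes the sub-$\kappa$-frame of $\mathcal{BL} A=\mathcal{BL} B$ generated by $B$. *)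

theory Defs
  imports Main
begin

unbundle cardinal_syntax

definition is_join :: "'a::lattice set \<Rightarrow> 'a \<Rightarrow> bool" where
  "is_join S s \<longleftrightarrow> (\<forall>x\<in>S. x \<le> s) \<and> (\<forall>y. (\<forall>x\<in>S. x \<le> y) \<longrightarrow> s \<le> y)"

definition is_dist_join :: "'a::lattice set \<Rightarrow> 'a \<Rightarrow> bool" where
  "is_dist_join S s \<longleftrightarrow> is_join S s \<and> (\<forall>a. is_join ((\<lambda>x. inf a x) ` S) (inf a s))"

definition kappa_complete :: "'k rel \<Rightarrow> 'a::lattice itself \<Rightarrow> bool" where
  "kappa_complete \<kappa> _ \<longleftrightarrow> (\<forall>S::'a set. |S| <o \<kappa> \<longrightarrow> (\<exists>s. is_join S s))"

definition heyting :: "'a::lattice itself \<Rightarrow> bool" where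
  "heyting _ \<longleftrightarrow> (\<forall>a b::'a. \<exists>c. \<forall>x. inf a x \<le> b \<longleftrightarrow> x \<le> c)"

definition kappaCH :: "'k rel \<Rightarrow> 'a::lattice itself \<Rightarrow> bool" where
  "kappaCH \<kappa> T \<longleftrightarrow> kappa_complete \<kappa> T \<and> heyting T"

definition D_ideal :: "'a::lattice set \<Rightarrow> bool" where
  "D_ideal I \<longleftrightarrow> (\<forall>x y. y \<in> I \<longrightarrow> x \<le> y \<longrightarrow> x \<in> I)
                 \<and> (\<forall>S s. S \<subseteq> I \<longrightarrow> is_dist_join S s \<longrightarrow> s \<in> I)"

definition BL :: "'a::lattice set set" where
  "BL = {I. D_ideal I}"

definition BL_Join :: "'a::lattice set set \<Rightarrow> 'a set" where
  "BL_Join F = \<Inter>{I. D_ideal I \<and> \<Union>F \<subseteq> I}"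

text \<open>Embedding of \<open>A\<close> into \<open>BL A\<close> via principal downsets.\<close>
definition principal :: "'a::lattice \<Rightarrow> 'a set" where
  "principal a = {x. x \<le> a}"

definition rel_ann :: "'a::lattice \<Rightarrow> 'a \<Rightarrow> 'a set" where
  "rel_ann a b = {x. inf a x \<le> b}"

text \<open>The proHeyting extension: the bounded sublattice of \<open>BL A\<close> generated by
  the relative annihilators (meets in \<open>BL A\<close> are intersections, top is \<open>UNIV\<close>,
  joins are \<open>BL_Join\<close>, bottom is \<open>BL_Join {}\<close>).\<close>
inductive_set pH :: "'a::lattice set set" where
  ann: "rel_ann a b \<in> pH"
| top: "UNIV \<in> pH"
| bot: "BL_Join {} \<in> pH"
| meet: "I \<in> pH \<Longrightarrow> J \<in> pH \<Longrightarrow> I \<inter> J \<in> pH"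
| join: "I \<in> pH \<Longrightarrow> J \<in> pH \<Longrightarrow> BL_Join {I, J} \<in> pH"

inductive_set BL_kappa :: "'k rel \<Rightarrow> 'a::lattice set set \<Rightarrow> 'a set set"
  for \<kappa> :: "'k rel" and B :: "'a set set" where
  gen: "I \<in> B \<Longrightarrow> I \<in> BL_kappa \<kappa> B"
| top: "UNIV \<in> BL_kappa \<kappa> B"
| meet: "I \<in> BL_kappa \<kappa> B \<Longrightarrow> J \<in> BL_kappa \<kappa> B \<Longrightarrow> I \<inter> J \<in> BL_kappa \<kappa> B"
| join: "(\<And>I. I \<in> F \<Longrightarrow> I \<in> BL_kappa \<kappa> B) \<Longrightarrow> |F| <o \<kappa> \<Longrightarrow> BL_Join F \<in> BL_kappa \<kappa> B"

end

theory Submission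
  imports Defs
begin

lemma principal_D_ideal: "D_ideal (principal (y::'a::lattice))"
  unfolding D_ideal_def principal_def is_dist_join_def is_join_def
  by (auto intro: order_trans)

lemma BL_Join_principal:
  fixes S :: "'a::lattice set"
  assumes "is_dist_join S s"
  shows "BL_Join (principal ` S) = principal s"
proof
  show "BL_Join (principal ` S) \<subseteq> principal s"
  proof
    fix x assume "x \<in> BL_Join (principal ` S)"
    moreover have "\<Union> (principal ` S) \<subseteq> principal s"
      using assms unfolding principal_def is_dist_join_def is_join_def
      using order_trans by fastforce
    ultimately show "x \<in> principal s"
      unfolding BL_Join_def using principal_D_ideal[of s] by blast
  qed
next
  show "principal s \<subseteq> BL_Join (principal ` S)"
  proof
    fix x assume x: "x \<in> principal s"
    show "x \<in> BL_Join (principal ` S)"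
      unfolding BL_Join_def
    proof clarify
      fix I assume I: "D_ideal I" "\<Union> (principal ` S) \<subseteq> I"
      have "S \<subseteq> I" using I(2) by (auto simp: principal_def)
      hence "s \<in> I" using I(1) assms unfolding D_ideal_def by blast
      thus "x \<in> I" using I(1) x unfolding D_ideal_def principal_def by blast
    qed
  qed
qed

lemma principal_inj: "inj (principal :: 'a::lattice \<Rightarrow> 'a set)"
  by (rule injI) (auto simp: principal_def set_eq_iff intro: order.antisym)

lemma heyting_dist:
  fixes S :: "'a::lattice set"
  assumes h: "heyting TYPE('a)" and j: "is_join S s"
  shows "is_dist_join S s"
  unfolding is_dist_join_def
proof (intro conjI allI)
  show "is_join S s" by fact
  fix a
  show "is_join ((\<lambda>x. inf a x) ` S) (inf a s)"
    unfolding is_join_def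
  proof (intro conjI allI impI ballI)
    fix z assume "z \<in> (\<lambda>x. inf a x) ` S"
    then show "z \<le> inf a s" using j unfolding is_join_def
      by (auto intro: le_infI2)
  next
    fix y assume y: "\<forall>z\<in>(\<lambda>x. inf a x) ` S. z \<le> y"
    obtain c where c: "\<And>x. inf a x \<le> y \<longleftrightarrow> x \<le> c" using h unfolding heyting_def by blast
    have "\<forall>x\<in>S. x \<le> c" using y c by auto
    hence "s \<le> c" using j unfolding is_join_def by blast
    thus "inf a s \<le> y" using c by blast
  qed
qed

lemma sup_dist_join:
  "is_dist_join {a, b} (sup a (b::'a::distrib_lattice))"
  unfolding is_dist_join_def is_join_def by (auto simp: inf_sup_distrib1)

lemma rel_ann_top: "rel_ann top a = principal (a::'a::bounded_lattice)"
  by (simp add: rel_ann_def principal_def)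

lemma BL_Join_empty:
  "BL_Join {} = principal (bot::'a::bounded_lattice)"
proof -
  have "is_dist_join {} (bot::'a)" unfolding is_dist_join_def is_join_def by auto
  from BL_Join_principal[OF this] show ?thesis by simp
qed

theorem theorem4p19:
  fixes \<kappa> :: "'k rel"
  assumes "Cinfinite \<kappa>" and "regularCard \<kappa>"
  shows "kappaCH \<kappa> TYPE('a::{distrib_lattice, bounded_lattice})
         \<longleftrightarrow> BL_kappa \<kappa> (pH :: 'a set set) = range principal"
proof
  assume K: "kappaCH \<kappa> TYPE('a)"
  hence h: "heyting TYPE('a)" and kc: "kappa_complete \<kappa> TYPE('a)"
    unfolding kappaCH_def by auto
  have pH_sub: "I \<in> range principal" if "I \<in> (pH :: 'a set set)" for I
    using that
  proof induct
    case (ann a b)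
    obtain c where c: "\<And>x. inf a x \<le> b \<longleftrightarrow> x \<le> c" using h unfolding heyting_def by blast
    have "rel_ann a b = principal c" using c by (auto simp: rel_ann_def principal_def)
    thus ?case by blast
  next
    case top
    have "(UNIV::'a set) = principal top" by (auto simp: principal_def)
    thus ?case by blast
  next
    case bot
    show ?case using BL_Join_empty by (metis rangeI)
  next
    case (meet I J)
    then obtain a b where "I = principal a" "J = principal b" by blast
    hence "I \<inter> J = principal (inf a b)" by (auto simp: principal_def)
    thus ?case by blast
  next
    case (join I J)
    then obtain a b where "I = principal a" "J = principal b" by blast
    hence "BL_Join {I, J} = principal (sup a b)"
      using BL_Join_principal[OF sup_dist_join[of a b]] by simp
    thus ?case by blast
  qed
  show "BL_kappa \<kappa> (pH :: 'a set set) = range principal"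
  proof
    have sub: "I \<in> range principal" if "I \<in> BL_kappa \<kappa> (pH :: 'a set set)" for I
      using that
      proof induct
        case (gen I) thus ?case by (rule pH_sub)
      next
        case top
        have "(UNIV::'a set) = principal top" by (auto simp: principal_def)
        thus ?case by blast
      next
        case (meet I J)
        then obtain a b where "I = principal a" "J = principal b" by blast
        hence "I \<inter> J = principal (inf a b)" by (auto simp: principal_def)
        thus ?case by blast
      next
        case (join F)
        define S where "S = {a::'a. principal a \<in> F}"
        have "\<forall>I\<in>F. I \<in> range principal" using join by blast
        hence FS: "F = principal ` S" unfolding S_def by (auto simp: image_iff)
        have "|S| \<le>o |F|" unfolding FS
          using card_of_ordLeq principal_inj by (metis inj_on_subset subset_UNIV order_refl)
        hence "|S| <o \<kappa>" using \<open>|F| <o \<kappa>\<close> by (rule ordLeq_ordLess_trans)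
        then obtain s where "is_join S s" using kc unfolding kappa_complete_def by blast
        hence "is_dist_join S s" using heyting_dist h by blast
        hence "BL_Join F = principal s" using BL_Join_principal FS by blast
        thus "BL_Join F \<in> range principal" by blast
      qed
    then show "BL_kappa \<kappa> (pH :: 'a set set) \<subseteq> range principal" by blast
  next
    show "range principal \<subseteq> BL_kappa \<kappa> (pH :: 'a set set)"
      using rel_ann_top pH.ann BL_kappa.gen by (metis image_subsetI)
  qed
next
  assume E: "BL_kappa \<kappa> (pH :: 'a set set) = range principal"
  have heyt: "heyting TYPE('a)" unfolding heyting_def
  proof (intro allI)
    fix a b :: 'a
    have "rel_ann a b \<in> BL_kappa \<kappa> pH" by (rule BL_kappa.gen[OF pH.ann])
    then obtain c where "rel_ann a b = principal c" using E by auto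
    hence "\<forall>x. inf a x \<le> b \<longleftrightarrow> x \<le> c"
      by (auto simp: rel_ann_def principal_def set_eq_iff)
    thus "\<exists>c. \<forall>x. inf a x \<le> b \<longleftrightarrow> x \<le> c" by blast
  qed
  have kc: "kappa_complete \<kappa> TYPE('a)" unfolding kappa_complete_def
  proof (intro allI impI)
    fix S :: "'a set" assume S: "|S| <o \<kappa>"
    have "|principal ` S| \<le>o |S|" by (rule card_of_image)
    hence "|principal ` S| <o \<kappa>" using S ordLeq_ordLess_trans by blast
    moreover have "\<And>I. I \<in> principal ` S \<Longrightarrow> I \<in> BL_kappa \<kappa> pH"
      using E by auto
    ultimately have "BL_Join (principal ` S) \<in> BL_kappa \<kappa> pH"
      using BL_kappa.join by blast
    then obtain s where s: "BL_Join (principal ` S) = principal s" using E by auto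
    have "is_join S s" unfolding is_join_def
    proof (intro conjI ballI allI impI)
      fix x assume "x \<in> S"
      hence "x \<in> BL_Join (principal ` S)" unfolding BL_Join_def principal_def by auto
      thus "x \<le> s" using s by (simp add: principal_def)
    next
      fix y assume y: "\<forall>x\<in>S. x \<le> y"
      have "BL_Join (principal ` S) \<subseteq> principal y"
      proof
        fix x assume "x \<in> BL_Join (principal ` S)"
        moreover have "\<Union> (principal ` S) \<subseteq> principal y"
          using y unfolding principal_def using order_trans by fastforce
        ultimately show "x \<in> principal y"
          unfolding BL_Join_def using principal_D_ideal[of y] by blast
      qed
      moreover have "s \<in> principal s" by (simp add: principal_def)
      ultimately show "s \<le> y" using s by (auto simp: principal_def)
    qed
    thus "\<exists>s. is_join S s" by blast
  qed
  show "kappaCH \<kappa> TYPE('a)" unfolding kappaCH_def using heyt kc by blast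
qed

end
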